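(* Let $X$ be a closed subset of $\mathbb{R}^n$ and let $q\ge p$ be nonnegative integers. Then $\tau^q(X)_p$ is a closed subbundle of $X\times\mathcal{P}_p^*$.
   Context: Notation. $\mathcal{P}_k$ is the space of real polynomials on $\mathbb{R}^n$ of degree $\le k$, $\mathcal{P}_k^*$ its dual, $r_k=\dim\mathcal{P}_k$. For $\xi\in\mathcal{P}_k^*$, $b\in\mathbb{R}^n$, $|\alpha|\le k$: $\xi_\alpha(b):=\xi(\tfrac1{\alpha!}(x-b)^\alpha)$; $\delta_a(P)=P(a)$. A bundle over $X$ with fibres in $W$ is a subset of $X\times W$ whose fibres are linear subspaces. Paratangent bundle of order $k$: for a bundle $E\subset X\times\mathcal{P}_k^*$, $\Delta E=\{(a,b,\xi+\eta):a,b\in X,\xi\in E_a,\eta\in E_b,|a-b|^{k-|\alpha|}|\eta_\alpha(b)|\le1\ \forall|\alpha|\le k\}$, $E'=\{(a,\xi):(a,a,\xi)\in\overline{\Delta E}\}$ (closure in $X\times X\times\mathcal{P}_k^*$), $\rho(E)=\{(a,\xi):\xi\in\operatorname{Span}E'_a\}$; with $E_0=\{(a,\lambda\delta_a):a\in X,\lambda\in\mathbb{R}\}$, $\rho^i(E_0)$ is constant for $i\ge2r_k$ and $\tau^k(X):=\rho^{2r_k}(E_0)$, with fibres $\tau^k_a(X)$. For $a\in\mathbb{R}^n$ let $\pi_a:\mathcal{P}_q\to\mathcal{P}_p$ send $\sum_{|\beta|\le q}c_\beta(x-a)^\beta$ to $\sum_{|\beta|\le p}c_\beta(x-a)^\beta$,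 and let $\iota_a:\mathcal{P}_p^*\to\mathcal{P}_q^*$, $\iota_a(\xi)=\xi\circ\pi_a$ (an injection whose image is the annihilator of $\{P\in\mathcal{P}_q:D^\alpha P(a)=0,\ |\alpha|\le p\}$). $\tau^q(X)_p$ is the bundle over $X$ with fibres $\tau^q_a(X)_p:=\iota_a^{-1}(\tau^q_a(X))\subset\mathcal{P}_p^*$. *)

theory Defs
  imports "HOL-Analysis.Analysis"
begin

text \<open>Multi-indices on R^n (n = CARD('n)) are functions 'n => nat.
 A polynomial of degree <= k is represented by its coefficient function
 w.r.t. the monomial basis x^beta (centered at 0); an element xi of the dual
 space P_k^* is represented by its coordinate function beta |-> xi(x^beta),
 vanishing for |beta| > k.  The function space carries the product topology,
 which on this finite-dimensional subspace is the usual one.\<close>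

type_synonym 'n mi = "'n \<Rightarrow> nat"
type_synonym 'n coefs = "'n mi \<Rightarrow> real"

definition mdeg :: "('n::finite) mi \<Rightarrow> nat" where
  "mdeg \<alpha> = (\<Sum>i\<in>UNIV. \<alpha> i)"

definition mis :: "nat \<Rightarrow> ('n::finite) mi set" where
  "mis k = {\<alpha>. mdeg \<alpha> \<le> k}"

definition rdim :: "nat \<Rightarrow> ('n::finite) itself \<Rightarrow> nat" where
  "rdim k _ = card (mis k :: 'n mi set)"

definition mfact :: "('n::finite) mi \<Rightarrow> real" where
  "mfact \<alpha> = (\<Prod>i\<in>UNIV. fact (\<alpha> i))"

definition Pk :: "nat \<Rightarrow> ('n::finite) coefs set" where
  "Pk k = {P. \<forall>\<alpha>. k < mdeg \<alpha> \<longrightarrow> P \<alpha> = 0}"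

definition dualk :: "nat \<Rightarrow> ('n::finite) coefs set" where
  "dualk k = {\<xi>. \<forall>\<alpha>. k < mdeg \<alpha> \<longrightarrow> \<xi> \<alpha> = 0}"

definition app :: "nat \<Rightarrow> ('n::finite) coefs \<Rightarrow> 'n coefs \<Rightarrow> real" where
  "app k \<xi> P = (\<Sum>\<beta>\<in>mis k. \<xi> \<beta> * P \<beta>)"

definition mono :: "('n::finite) mi \<Rightarrow> 'n coefs" where
  "mono \<beta> = (\<lambda>\<gamma>. if \<gamma> = \<beta> then 1 else 0)"

text \<open>coefficients of (x - b)^alpha\<close>
definition shiftmono :: "real^('n::finite) \<Rightarrow> 'n mi \<Rightarrow> 'n coefs" where
  "shiftmono b \<alpha> = (\<lambda>\<beta>. \<Prod>i\<in>UNIV. of_nat (\<alpha> i choose \<beta> i) * (- (b $ i)) ^ (\<alpha> i - \<beta> i))"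

definition xi_at :: "nat \<Rightarrow> ('n::finite) coefs \<Rightarrow> 'n mi \<Rightarrow> real^'n \<Rightarrow> real" where
  "xi_at k \<xi> \<alpha> b = app k \<xi> (shiftmono b \<alpha>) / mfact \<alpha>"

definition delta :: "nat \<Rightarrow> real^('n::finite) \<Rightarrow> 'n coefs" where
  "delta k a = (\<lambda>\<beta>. if mdeg \<beta> \<le> k then (\<Prod>i\<in>UNIV. (a $ i) ^ (\<beta> i)) else 0)"

definition fibre :: "('a \<times> 'w) set \<Rightarrow> 'a \<Rightarrow> 'w set" where
  "fibre E a = {\<xi>. (a, \<xi>) \<in> E}"

definition fspan :: "('n::finite) coefs set \<Rightarrow> 'n coefs set" where
  "fspan S = {(\<lambda>\<beta>. \<Sum>j<(m::nat). c j * v j \<beta>) | m c v. \<forall>j<m. v j \<in> S}"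

definition DeltaE :: "nat \<Rightarrow> (real^('n::finite)) set \<Rightarrow> ((real^'n) \<times> 'n coefs) set
    \<Rightarrow> ((real^'n) \<times> (real^'n) \<times> 'n coefs) set" where
  "DeltaE k X E = {(a, b, (\<lambda>\<beta>. \<xi> \<beta> + \<eta> \<beta>)) | a b \<xi> \<eta>.
      a \<in> X \<and> b \<in> X \<and> \<xi> \<in> fibre E a \<and> \<eta> \<in> fibre E b \<and>
      (\<forall>\<alpha>\<in>mis k. dist a b ^ (k - mdeg \<alpha>) * \<bar>xi_at k \<eta> \<alpha> b\<bar> \<le> 1)}"

definition Eprime :: "nat \<Rightarrow> (real^('n::finite)) set \<Rightarrow> ((real^'n) \<times> 'n coefs) set
    \<Rightarrow> ((real^'n) \<times> 'n coefs) set" where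
  "Eprime k X E = {(a, \<xi>). (a, a, \<xi>) \<in> closure (DeltaE k X E) \<inter> (X \<times> X \<times> dualk k)}"

definition rho :: "nat \<Rightarrow> (real^('n::finite)) set \<Rightarrow> ((real^'n) \<times> 'n coefs) set
    \<Rightarrow> ((real^'n) \<times> 'n coefs) set" where
  "rho k X E = {(a, \<xi>). a \<in> X \<and> \<xi> \<in> fspan (fibre (Eprime k X E) a)}"

definition E0 :: "nat \<Rightarrow> (real^('n::finite)) set \<Rightarrow> ((real^'n) \<times> 'n coefs) set" where
  "E0 k X = {(a, (\<lambda>\<beta>. c * delta k a \<beta>)) | a (c::real). a \<in> X}"

definition tau :: "nat \<Rightarrow> (real^('n::finite)) set \<Rightarrow> ((real^'n) \<times> 'n coefs) set" where
  "tau k X = (rho k X ^^ (2 * rdim k TYPE('n))) (E0 k X)"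

text \<open>Taylor coefficient of P at a: coefficient of (x-a)^gamma, i.e. D^gamma P(a)/gamma!\<close>
definition taylor_coef :: "nat \<Rightarrow> real^('n::finite) \<Rightarrow> 'n coefs \<Rightarrow> 'n mi \<Rightarrow> real" where
  "taylor_coef q a P \<gamma> =
     (\<Sum>\<beta>\<in>mis q. P \<beta> * (\<Prod>i\<in>UNIV. of_nat (\<beta> i choose \<gamma> i) * (a $ i) ^ (\<beta> i - \<gamma> i)))"

definition proj :: "nat \<Rightarrow> nat \<Rightarrow> real^('n::finite) \<Rightarrow> 'n coefs \<Rightarrow> 'n coefs" where
  "proj q p a P = (\<lambda>\<beta>. \<Sum>\<gamma>\<in>mis p. taylor_coef q a P \<gamma> * shiftmono a \<gamma> \<beta>)"

definition iota :: "nat \<Rightarrow> nat \<Rightarrow> real^('n::finite) \<Rightarrow> 'n coefs \<Rightarrow> 'n coefs" where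
  "iota q p a \<xi> = (\<lambda>\<beta>. if mdeg \<beta> \<le> q then app p \<xi> (proj q p a (mono \<beta>)) else 0)"

definition tau_p :: "nat \<Rightarrow> nat \<Rightarrow> (real^('n::finite)) set \<Rightarrow> ((real^'n) \<times> 'n coefs) set" where
  "tau_p q p X = {(a, \<xi>). a \<in> X \<and> \<xi> \<in> dualk p \<and> (a, iota q p a \<xi>) \<in> tau q X}"

definition is_bundle :: "(real^('n::finite)) set \<Rightarrow> 'n coefs set \<Rightarrow> ((real^'n) \<times> 'n coefs) set \<Rightarrow> bool" where
  "is_bundle X W E \<longleftrightarrow> E \<subseteq> X \<times> W \<and>
     (\<forall>a\<in>X. (\<lambda>_. 0) \<in> fibre E a \<and>
        (\<forall>\<xi>\<in>fibre E a. \<forall>\<eta>\<in>fibre E a. (\<lambda>\<beta>. \<xi> \<beta> + \<eta> \<beta>) \<in> fibre E a) \<and>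
        (\<forall>\<xi>\<in>fibre E a. \<forall>c::real. (\<lambda>\<beta>. c * \<xi> \<beta>) \<in> fibre E a))"

end

theory Submission
  imports Defs "HOL-Library.Function_Algebras"
begin

definition sc :: "real \<Rightarrow> ('a \<Rightarrow> real) \<Rightarrow> ('a \<Rightarrow> real)" where "sc c f = (\<lambda>x. c * f x)"

interpretation fv: vector_space "sc :: real \<Rightarrow> ('a \<Rightarrow> real) \<Rightarrow> _"
  by unfold_locales (auto simp: sc_def fun_eq_iff algebra_simps)
interpretation fvp: vector_space_pair "sc :: real \<Rightarrow> ('a \<Rightarrow> real) \<Rightarrow> _" "sc :: real \<Rightarrow> ('b \<Rightarrow> real) \<Rightarrow> _"
  by unfold_locales

lemma sum_fun_apply: "(sum f A) x = (\<Sum>a\<in>A. f a x)"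
  by (induct A rule: infinite_finite_induct) auto

lemma sc_apply: "sc c f x = c * f x"
  by (simp add: sc_def)

lemma finite_mis: "finite (mis k :: ('n::finite) mi set)"
proof -
  have "mis k \<subseteq> (Pi\<^sub>E UNIV (\<lambda>_. {..k}) :: ('n::finite) mi set)"
  proof
    fix \<alpha> :: "'n mi" assume "\<alpha> \<in> mis k"
    then have "mdeg \<alpha> \<le> k" by (simp add: mis_def)
    moreover have "\<alpha> i \<le> mdeg \<alpha>" for i
      unfolding mdeg_def by (rule member_le_sum) auto
    ultimately show "\<alpha> \<in> Pi\<^sub>E UNIV (\<lambda>_. {..k})"
      by (auto simp: PiE_UNIV_domain intro: le_trans)
  qed
  moreover have "finite (Pi\<^sub>E (UNIV::'n set) (\<lambda>_. {..k}))"
    by (rule finite_PiE) auto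
  ultimately show ?thesis by (rule finite_subset)
qed

lemma dualk_expand:
  assumes "\<xi> \<in> dualk k"
  shows "\<xi> = (\<Sum>\<beta>\<in>mis k. sc (\<xi> \<beta>) (Defs.mono \<beta>))"
proof
  fix \<gamma>
  show "\<xi> \<gamma> = (\<Sum>\<beta>\<in>mis k. sc (\<xi> \<beta>) (Defs.mono \<beta>)) \<gamma>"
  proof (cases "\<gamma> \<in> mis k")
    case True
    then show ?thesis
      by (simp add: sc_apply sum_fun_apply Defs.mono_def finite_mis if_distrib[where f="\<lambda>x. _ * x"] cong: if_cong)
  next
    case False
    then show ?thesis using assms
      by (auto simp: sc_apply sum_fun_apply Defs.mono_def dualk_def mis_def intro!: sum.neutral)
  qed
qed

lemma dualk_sub_span: "dualk k \<subseteq> fv.span (Defs.mono ` mis k)"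
proof
  fix \<xi> :: "('n::finite) coefs" assume "\<xi> \<in> dualk k"
  then have "\<xi> = (\<Sum>\<beta>\<in>mis k. sc (\<xi> \<beta>) (Defs.mono \<beta>))" by (rule dualk_expand)
  also have "\<dots> \<in> fv.span (Defs.mono ` mis k)"
    by (intro fv.span_sum fv.span_scale fv.span_base) auto
  finally show "\<xi> \<in> fv.span (Defs.mono ` mis k)" .
qed

lemma subspace_dualk: "fv.subspace (dualk k)"
  by (auto simp: sc_apply fv.subspace_def dualk_def)

lemma closed_dualk: "closed (dualk k)"
proof -
  have "dualk k = (\<Inter>\<alpha>\<in>{\<alpha>. k < mdeg \<alpha>}. {\<xi>. \<xi> \<alpha> = 0})"
    by (auto simp: dualk_def)
  also have "closed \<dots>"
    by (intro closed_INT ballI closed_Collect_eq continuous_on_product_coordinates continuous_on_const)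
  finally show ?thesis .
qed

lemma finite_indep_dualk:
  fixes B :: "('n::finite) coefs set"
  assumes "fv.independent B" "B \<subseteq> dualk k"
  shows "finite B \<and> card B \<le> card (mis k :: 'n mi set)"
proof -
  have sp: "B \<subseteq> fv.span (Defs.mono ` (mis k :: 'n mi set))" using assms(2) dualk_sub_span by (rule order_trans)
  have fin: "finite (Defs.mono ` (mis k :: 'n mi set))" by (rule finite_imageI[OF finite_mis])
  have "finite B \<and> card B \<le> card (Defs.mono ` (mis k :: 'n mi set))"
    by (rule fv.independent_span_bound[OF fin assms(1) sp])
  moreover have "card (Defs.mono ` (mis k :: 'n mi set)) \<le> card (mis k :: 'n mi set)" by (rule card_image_le[OF finite_mis])
  ultimately show ?thesis by linarith
qed

lemma indep_card_le_dim:
  fixes B :: "('n::finite) coefs set"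
  assumes "fv.independent B" "B \<subseteq> W" "W \<subseteq> dualk k"
  shows "finite B \<and> card B \<le> fv.dim W"
proof -
  obtain B' where B': "B' \<subseteq> W" "fv.independent B'" "W \<subseteq> fv.span B'" "card B' = fv.dim W"
    by (rule fv.basis_exists)
  have "B' \<subseteq> dualk k" using B'(1) assms(3) by (rule order_trans)
  then have fin: "finite B'" using finite_indep_dualk[OF B'(2)] by blast
  have sp: "B \<subseteq> fv.span B'" using assms(2) B'(3) by (rule order_trans)
  show ?thesis using fv.independent_span_bound[OF fin assms(1) sp] B'(4) by simp
qed

lemma dim_le_rdim:
  fixes W :: "('n::finite) coefs set"
  assumes "W \<subseteq> dualk k"
  shows "fv.dim W \<le> card (mis k :: 'n mi set)"
proof -
  have sp: "W \<subseteq> fv.span (Defs.mono ` (mis k :: 'n mi set))" using assms dualk_sub_span by (rule order_trans)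
  have "fv.dim W \<le> card (Defs.mono ` (mis k :: 'n mi set))"
    by (rule fv.dim_le_card[OF sp]) (simp add: finite_mis)
  also have "\<dots> \<le> card (mis k :: 'n mi set)" by (rule card_image_le[OF finite_mis])
  finally show ?thesis .
qed

lemma dim_psub:
  fixes V :: "('n::finite) coefs set"
  assumes "fv.subspace V" "fv.subspace V'" "V \<subseteq> V'" "V \<noteq> V'" "V' \<subseteq> dualk k"
  shows "fv.dim V < fv.dim V'"
proof -
  obtain B where B: "B \<subseteq> V" "fv.independent B" "V \<subseteq> fv.span B" "card B = fv.dim V"
    by (rule fv.basis_exists)
  obtain v where v: "v \<in> V'" "v \<notin> V" using assms(3,4) by blast
  have "fv.span B \<subseteq> V" using B(1) assms(1) by (rule fv.span_minimal)
  then have nv: "v \<notin> fv.span B" using v by blast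
  have ind: "fv.independent (insert v B)" using fv.independent_insertI[OF nv B(2)] .
  have sub: "insert v B \<subseteq> V'" using B(1) v(1) assms(3) by blast
  have "finite (insert v B) \<and> card (insert v B) \<le> fv.dim V'"
    by (rule indep_card_le_dim[OF ind sub assms(5)])
  moreover have "v \<notin> B" using v B(1) by blast
  ultimately show ?thesis using B(4) card_insert_disjoint[of B v] by auto
qed

lemma dim_pos:
  fixes V :: "('n::finite) coefs set"
  assumes "v \<in> V" "v \<noteq> 0" "V \<subseteq> dualk k"
  shows "1 \<le> fv.dim V"
proof -
  have "v \<notin> fv.span {}" using assms(2) by (simp add: fv.span_empty)
  then have ind: "fv.independent {v}" using fv.independent_insertI[of v "{}"] fv.independent_empty by blast
  have sub: "{v} \<subseteq> V" using assms(1) by blast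
  show ?thesis using indep_card_le_dim[OF ind sub assms(3)] by simp
qed


lemma linear_restr: "Vector_Spaces.linear sc sc (\<lambda>v::'a\<Rightarrow>real. (\<lambda>\<beta>. if \<beta> \<in> T then v \<beta> else 0))"
  unfolding Vector_Spaces.linear_iff using fv.vector_space_axioms
  by (auto simp: fun_eq_iff sc_def)

lemma dim_inj_le:
  fixes V :: "('n::finite) coefs set"
  assumes V: "fv.subspace V" "V \<subseteq> dualk k" and T: "finite T"
    and inj: "\<forall>v\<in>V. (\<forall>t\<in>T. v t = 0) \<longrightarrow> v = 0"
  shows "fv.dim V \<le> card T"
proof -
  obtain B where B: "B \<subseteq> V" "fv.independent B" "V \<subseteq> fv.span B" "card B = fv.dim V"
    by (rule fv.basis_exists)
  define R where "R v = (\<lambda>\<beta>. if \<beta> \<in> T then v \<beta> else (0::real))" for v :: "'n coefs"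
  have lin: "Vector_Spaces.linear sc sc R" unfolding R_def by (rule linear_restr)
  have spB: "fv.span B \<subseteq> V" using B(1) V(1) by (rule fv.span_minimal)
  have injR: "inj_on R (fv.span B)"
  proof (rule inj_onI)
    fix x y assume xy: "x \<in> fv.span B" "y \<in> fv.span B" "R x = R y"
    have "x - y \<in> V" using xy(1,2) spB V(1) by (auto intro: fv.subspace_diff)
    moreover have "\<forall>t\<in>T. (x - y) t = 0"
    proof
      fix t assume "t \<in> T"
      then have "R x t = x t" "R y t = y t" by (auto simp: R_def)
      then show "(x - y) t = 0" using xy(3) by simp
    qed
    ultimately have "x - y = 0" using inj by blast
    then show "x = y" by simp
  qed
  have indR: "fv.independent (R ` B)"
    by (rule fvp.linear_independent_injective_image[OF lin B(2) injR])
  have RT: "R ` B \<subseteq> fv.span (Defs.mono ` T)"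
  proof
    fix y assume "y \<in> R ` B"
    then obtain v where y: "y = R v" by blast
    have "R v = (\<Sum>t\<in>T. sc (v t) (Defs.mono t))"
    proof
      fix \<gamma>
      show "R v \<gamma> = (\<Sum>t\<in>T. sc (v t) (Defs.mono t)) \<gamma>"
      proof (cases "\<gamma> \<in> T")
        case True
        then show ?thesis
          by (simp add: sc_apply R_def sum_fun_apply Defs.mono_def T if_distrib[where f="\<lambda>x. _ * x"] cong: if_cong)
      next
        case False
        then show ?thesis
          by (auto simp: sc_apply R_def sum_fun_apply Defs.mono_def intro!: sum.neutral)
      qed
    qed
    also have "\<dots> \<in> fv.span (Defs.mono ` T)"
      by (intro fv.span_sum fv.span_scale fv.span_base) auto
    finally show "y \<in> fv.span (Defs.mono ` T)" using y by simp
  qed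
  have finT: "finite (Defs.mono ` T)" using T by simp
  have "finite (R ` B) \<and> card (R ` B) \<le> card (Defs.mono ` T)"
    by (rule fv.independent_span_bound[OF finT indR RT])
  moreover have "card (R ` B) = card B"
    using injR fv.span_superset[of B] by (intro card_image) (rule inj_on_subset)
  moreover have "card (Defs.mono ` T) \<le> card T" using T by (rule card_image_le)
  ultimately show ?thesis using B(4) by linarith
qed

lemma exists_T:
  fixes W :: "('n::finite) coefs set"
  assumes W: "fv.subspace W" "W \<subseteq> dualk k"
  shows "\<exists>T \<subseteq> mis k. (\<forall>w\<in>W. (\<forall>t\<in>T. w t = 0) \<longrightarrow> w = 0) \<and> card T \<le> fv.dim W"
proof -
  define free where "free T \<longleftrightarrow> (\<forall>f. \<exists>w\<in>W. \<forall>t\<in>T. w t = f t)" for T :: "'n mi set"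
  define F where "F = {T. T \<subseteq> mis k \<and> free T}"
  have "F \<subseteq> Pow (mis k)" unfolding F_def by blast
  then have finF: "finite F" using finite_mis[of k] by (meson finite_Pow_iff finite_subset)
  have "{} \<in> F" unfolding F_def free_def using fv.subspace_0[OF W(1)] by blast
  then have neF: "F \<noteq> {}" by blast
  define m where "m = Max (card ` F)"
  have "m \<in> card ` F" unfolding m_def using finF neF by (intro Max_in) auto
  then obtain T where T: "T \<in> F" "card T = m" by blast
  have maxT: "card T' \<le> card T" if "T' \<in> F" for T'
    using T(2) that finF unfolding m_def by (auto intro: Max_ge)
  have Tsub: "T \<subseteq> mis k" and freeT: "free T" using T(1) by (auto simp: F_def)
  have finT: "finite T" using Tsub finite_mis by (rule finite_subset)
  have injT: "\<forall>w\<in>W. (\<forall>t\<in>T. w t = 0) \<longrightarrow> w = 0"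
  proof (intro ballI impI)
    fix w assume w: "w \<in> W" "\<forall>t\<in>T. w t = 0"
    show "w = 0"
    proof (rule ccontr)
      assume "w \<noteq> 0"
      then obtain \<beta> where b: "w \<beta> \<noteq> 0" by (auto simp: fun_eq_iff)
      have bmis: "\<beta> \<in> mis k"
        using b w(1) W(2) by (force simp: dualk_def mis_def)
      have bT: "\<beta> \<notin> T" using b w(2) by blast
      have "free (insert \<beta> T)"
        unfolding free_def
      proof
        fix f :: "'n coefs"
        obtain w' where w': "w' \<in> W" "\<forall>t\<in>T. w' t = f t" using freeT unfolding free_def by blast
        define u where "u = w' + sc ((f \<beta> - w' \<beta>) / w \<beta>) w"
        have "u \<in> W" unfolding u_def
          using W(1) w'(1) w(1) by (intro fv.subspace_add fv.subspace_scale) auto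
        moreover have "\<forall>t\<in>insert \<beta> T. u t = f t"
          using w'(2) w(2) b by (auto simp: sc_apply u_def)
        ultimately show "\<exists>w\<in>W. \<forall>t\<in>insert \<beta> T. w t = f t" by blast
      qed
      then have "insert \<beta> T \<in> F" using bmis Tsub by (auto simp: F_def)
      then have "card (insert \<beta> T) \<le> card T" by (rule maxT)
      then show False using bT finT by simp
    qed
  qed
  have "\<exists>w. w \<in> W \<and> (\<forall>s\<in>T. w s = (if s = t then 1 else 0))" for t
  proof -
    have "\<forall>f. \<exists>w\<in>W. \<forall>s\<in>T. w s = f s" using freeT unfolding free_def .
    then obtain w where "w \<in> W" "\<forall>s\<in>T. w s = (\<lambda>s. if s = t then 1 else 0) s"
      by (elim allE[where x="\<lambda>s. if s = t then 1 else 0"]) blast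
    then show ?thesis by auto
  qed
  then obtain g where g: "\<And>t. g t \<in> W" "\<And>t s. s \<in> T \<Longrightarrow> g t s = (if s = t then 1 else 0)"
    by metis
  have injg: "inj_on g T"
  proof (rule inj_onI)
    fix t t' assume "t \<in> T" "t' \<in> T" "g t = g t'"
    then have "g t t = g t' t" by simp
    then show "t = t'" using g(2)[OF \<open>t \<in> T\<close>, of t] g(2)[OF \<open>t \<in> T\<close>, of t'] by (auto split: if_splits)
  qed
  have ind: "fv.independent (g ` T)"
  proof (rule fv.independent_if_scalars_zero)
    show "finite (g ` T)" using finT by simp
  next
    fix f x assume sum0: "(\<Sum>x\<in>g ` T. sc (f x) x) = 0" and x: "x \<in> g ` T"
    then obtain t0 where t0: "t0 \<in> T" "x = g t0" by blast
    have "0 = (\<Sum>x\<in>g ` T. sc (f x) x) t0" using sum0 by simp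
    also have "\<dots> = (\<Sum>x\<in>g ` T. f x * x t0)" by (simp add: sum_fun_apply sc_apply)
    also have "\<dots> = (\<Sum>t\<in>T. f (g t) * g t t0)" using injg by (simp add: sum.reindex)
    also have "\<dots> = (\<Sum>t\<in>T. if t = t0 then f (g t) else 0)"
      using g(2)[OF t0(1)] by (intro sum.cong) auto
    also have "\<dots> = f (g t0)" using t0(1) finT by simp
    finally show "f x = 0" using t0(2) by simp
  qed
  have "card (g ` T) \<le> fv.dim W"
    using indep_card_le_dim[OF ind _ W(2)] g(1) by blast
  then have "card T \<le> fv.dim W" using card_image[OF injg] by simp
  then show ?thesis using Tsub injT by blast
qed


lemma fspan_eq: "fspan S = fv.span S"
proof
  show "fspan S \<subseteq> fv.span S"
  proof
    fix x assume "x \<in> fspan S"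
    then obtain m c v where x: "x = (\<lambda>\<beta>. \<Sum>j<(m::nat). c j * v j \<beta>)" and v: "\<forall>j<m. v j \<in> S"
      unfolding fspan_def by blast
    have "x = (\<Sum>j<m. sc (c j) (v j))" unfolding x by (simp add: sc_apply fun_eq_iff sum_fun_apply)
    also have "\<dots> \<in> fv.span S" using v by (intro fv.span_sum fv.span_scale fv.span_base) auto
    finally show "x \<in> fv.span S" .
  qed
next
  show "fv.span S \<subseteq> fspan S"
  proof
    fix x assume "x \<in> fv.span S"
    then obtain t r where x: "x = (\<Sum>a\<in>t. sc (r a) a)" and t: "finite t" "t \<subseteq> S"
      unfolding fv.span_explicit by blast
    obtain h where h: "bij_betw h {0..<card t} t" using ex_bij_betw_nat_finite[OF t(1)] by blast
    have "x = (\<Sum>j\<in>{0..<card t}. sc (r (h j)) (h j))"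
      unfolding x by (rule sum.reindex_bij_betw[symmetric, OF h])
    also have "\<dots> = (\<lambda>\<beta>. \<Sum>j<card t. r (h j) * h j \<beta>)"
      by (simp add: sc_apply fun_eq_iff sum_fun_apply atLeast0LessThan)
    finally have "x = (\<lambda>\<beta>. \<Sum>j<card t. r (h j) * h j \<beta>)" .
    moreover have "\<forall>j<card t. h j \<in> S" using h t(2) by (auto simp: bij_betw_def)
    ultimately have "\<exists>m c v. x = (\<lambda>\<beta>. \<Sum>j<(m::nat). c j * v j \<beta>) \<and> (\<forall>j<m. v j \<in> S)"
      by (intro exI[of _ "card t"] exI[of _ "\<lambda>j. r (h j)"] exI[of _ h]) simp
    then show "x \<in> fspan S" unfolding fspan_def by blast
  qed
qed

lemma fibre_rho: "fibre (rho k X E) a = (if a \<in> X then fv.span (fibre (Eprime k X E) a) else {})"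
  by (auto simp: fibre_def rho_def fspan_eq)

lemma fibre_Eprime_dualk: "fibre (Eprime k X E) a \<subseteq> dualk k"
  by (auto simp: fibre_def Eprime_def)

lemma Eprime_X: "(a, \<xi>) \<in> Eprime k X E \<Longrightarrow> a \<in> X"
  by (auto simp: Eprime_def)

definition bnd :: "nat \<Rightarrow> (real^('n::finite)) set \<Rightarrow> ((real^'n) \<times> 'n coefs) set \<Rightarrow> bool" where
  "bnd k X E \<longleftrightarrow> E \<subseteq> X \<times> dualk k \<and> (\<forall>a\<in>X. fv.subspace (fibre E a))"

lemma fibre_sub_dualk: "bnd k X E \<Longrightarrow> fibre E a \<subseteq> dualk k"
  by (auto simp: bnd_def fibre_def)

lemma bnd_rho: "bnd k X (rho k X E)"
proof -
  have "fv.span (fibre (Eprime k X E) a) \<subseteq> dualk k" for a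
    by (rule fv.span_minimal[OF fibre_Eprime_dualk subspace_dualk])
  then have "rho k X E \<subseteq> X \<times> dualk k"
    by (force simp: rho_def fspan_eq fibre_def)
  moreover have "\<forall>a\<in>X. fv.subspace (fibre (rho k X E) a)"
    by (simp add: fibre_rho fv.subspace_span)
  ultimately show ?thesis by (simp add: bnd_def)
qed

lemma delta_dualk: "delta k a \<in> dualk k"
  by (auto simp: delta_def dualk_def)

lemma bnd_E0: "bnd k X (E0 k X)"
proof -
  have fib: "fibre (E0 k X) a = range (\<lambda>c. sc c (delta k a))" if "a \<in> X" for a
    using that by (auto simp: fibre_def E0_def sc_def)
  have "fv.subspace (range (\<lambda>c. sc c (delta k a)))" for a
  proof -
    have "range (\<lambda>c. sc c (delta k a)) = fv.span {delta k a}" by (simp add: fv.span_singleton)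
    then show ?thesis by (simp add: fv.subspace_span)
  qed
  moreover have "E0 k X \<subseteq> X \<times> dualk k"
  proof
    fix p assume "p \<in> E0 k X"
    then obtain a c where "p = (a, (\<lambda>\<beta>. c * delta k a \<beta>))" "a \<in> X" by (auto simp: E0_def)
    then show "p \<in> X \<times> dualk k" using delta_dualk[of k a] by (auto simp: dualk_def)
  qed
  ultimately show ?thesis unfolding bnd_def using fib by auto
qed

lemma app_zero[simp]: "app k (\<lambda>_. 0) P = 0"
  by (simp add: app_def)

lemma sub_Eprime:
  assumes "bnd k X E"
  shows "E \<subseteq> Eprime k X E"
proof
  fix p assume p: "p \<in> E"
  obtain a \<xi> where pa: "p = (a, \<xi>)" by (cases p)
  have aX: "a \<in> X" and xd: "\<xi> \<in> dualk k" using assms p pa by (auto simp: bnd_def)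
  have z: "(\<lambda>_. 0) \<in> fibre E a"
    using assms aX fv.subspace_0[of "fibre E a"] by (auto simp: bnd_def zero_fun_def)
  have xf: "\<xi> \<in> fibre E a" using p pa by (simp add: fibre_def)
  have "(a, a, (\<lambda>\<beta>. \<xi> \<beta> + (\<lambda>_. 0::real) \<beta>)) \<in> DeltaE k X E"
    unfolding DeltaE_def mem_Collect_eq
    by (intro exI[of _ a] exI[of _ \<xi>] exI[of _ "\<lambda>_. 0::real"]) (use aX xf z in \<open>auto simp: xi_at_def\<close>)
  then have "(a, a, \<xi>) \<in> DeltaE k X E" by simp
  then have "(a, a, \<xi>) \<in> closure (DeltaE k X E)" using closure_subset by blast
  then show "p \<in> Eprime k X E" using pa aX xd by (simp add: Eprime_def)
qed

lemma sub_rho: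
  assumes "bnd k X E"
  shows "E \<subseteq> rho k X E"
proof
  fix p assume p: "p \<in> E"
  obtain a \<xi> where pa: "p = (a, \<xi>)" by (cases p)
  have aX: "a \<in> X" using assms p pa by (auto simp: bnd_def)
  have "\<xi> \<in> fibre (Eprime k X E) a" using sub_Eprime[OF assms] p pa by (auto simp: fibre_def)
  then have "\<xi> \<in> fv.span (fibre (Eprime k X E) a)" using fv.span_superset by blast
  then show "p \<in> rho k X E" using pa aX by (simp add: rho_def fspan_eq)
qed

lemma mono_DeltaE: "E \<subseteq> F \<Longrightarrow> DeltaE k X E \<subseteq> DeltaE k X F"
  unfolding DeltaE_def fibre_def by blast

lemma mono_rho:
  assumes "E \<subseteq> F"
  shows "rho k X E \<subseteq> rho k X F"
proof -
  have "closure (DeltaE k X E) \<subseteq> closure (DeltaE k X F)"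
    by (rule closure_mono[OF mono_DeltaE[OF assms]])
  then have "fibre (Eprime k X E) a \<subseteq> fibre (Eprime k X F) a" for a
    by (auto simp: fibre_def Eprime_def)
  then have "fv.span (fibre (Eprime k X E) a) \<subseteq> fv.span (fibre (Eprime k X F) a)" for a
    by (rule fv.span_mono)
  then show ?thesis unfolding rho_def fspan_eq by blast
qed

lemma L3:
  fixes E :: "((real^('n::finite)) \<times> 'n coefs) set"
  assumes E: "bnd k X E" and aX: "a \<in> X"
    and ne: "fibre (rho k X (rho k X E)) a \<noteq> fibre (rho k X E) a" and e: "\<epsilon> > 0"
  shows "\<exists>c\<in>X. dist c a < \<epsilon> \<and> fibre (rho k X E) c \<noteq> fibre E c"
proof (rule ccontr)
  define F where "F = rho k X E"
  assume "\<not> ?thesis"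
  then have H: "\<And>c. c \<in> X \<Longrightarrow> dist c a < \<epsilon> \<Longrightarrow> fibre F c = fibre E c"
    unfolding F_def by blast
  have bF: "bnd k X F" unfolding F_def by (rule bnd_rho)
  have sub: "fibre (Eprime k X F) a \<subseteq> fibre F a"
  proof
    fix \<xi> assume "\<xi> \<in> fibre (Eprime k X F) a"
    then have cl: "(a, a, \<xi>) \<in> closure (DeltaE k X F)" and xd: "\<xi> \<in> dualk k"
      by (auto simp: fibre_def Eprime_def)
    define Ob where "Ob = ball a \<epsilon> \<times> ball a \<epsilon> \<times> (UNIV :: 'n coefs set)"
    have oO: "open Ob" unfolding Ob_def by (intro open_Times open_ball open_UNIV)
    have inO: "(a, a, \<xi>) \<in> Ob" using e by (simp add: Ob_def)
    have "Ob \<inter> DeltaE k X F \<subseteq> DeltaE k X E"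
    proof
      fix p assume p: "p \<in> Ob \<inter> DeltaE k X F"
      then obtain x y \<xi>' \<eta>' where px: "p = (x, y, (\<lambda>\<beta>. \<xi>' \<beta> + \<eta>' \<beta>))" "x \<in> X" "y \<in> X"
        "\<xi>' \<in> fibre F x" "\<eta>' \<in> fibre F y"
        "\<forall>\<alpha>\<in>mis k. dist x y ^ (k - mdeg \<alpha>) * \<bar>xi_at k \<eta>' \<alpha> y\<bar> \<le> 1"
        unfolding DeltaE_def by blast
      have "dist x a < \<epsilon>" "dist y a < \<epsilon>" using p px(1) by (auto simp: Ob_def dist_commute)
      then have "fibre F x = fibre E x" "fibre F y = fibre E y" using H px(2,3) by auto
      then show "p \<in> DeltaE k X E" using px unfolding DeltaE_def by blast
    qed
    then have "closure (Ob \<inter> DeltaE k X F) \<subseteq> closure (DeltaE k X E)" by (rule closure_mono)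
    moreover have "(a, a, \<xi>) \<in> closure (Ob \<inter> DeltaE k X F)"
      using open_Int_closure_subset[OF oO, of "DeltaE k X F"] inO cl by blast
    ultimately have "(a, a, \<xi>) \<in> closure (DeltaE k X E)" by blast
    then have "\<xi> \<in> fibre (Eprime k X E) a" using aX xd by (simp add: fibre_def Eprime_def)
    then show "\<xi> \<in> fibre F a" unfolding F_def fibre_rho using aX fv.span_superset by auto
  qed
  have sF: "fv.subspace (fibre F a)" using bF aX by (simp add: bnd_def)
  have "fibre (rho k X F) a \<subseteq> fibre F a"
    unfolding fibre_rho[of k X F] using aX fv.span_minimal[OF sub sF] by simp
  moreover have "fibre F a \<subseteq> fibre (rho k X F) a"
    using sub_rho[OF bF] by (auto simp: fibre_def)
  ultimately show False using ne unfolding F_def by blast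
qed


lemma DeltaE_diag:
  assumes "bnd k X E" "c \<in> X" "u \<in> fibre E c"
  shows "(c, c, u) \<in> DeltaE k X E"
proof -
  have z: "(\<lambda>_. 0) \<in> fibre E c"
    using assms fv.subspace_0[of "fibre E c"] by (auto simp: bnd_def zero_fun_def)
  have "(c, c, (\<lambda>\<beta>. u \<beta> + (\<lambda>_. 0::real) \<beta>)) \<in> DeltaE k X E"
    unfolding DeltaE_def mem_Collect_eq
    by (intro exI[of _ c] exI[of _ u] exI[of _ "\<lambda>_. 0::real"]) (use assms z in \<open>auto simp: xi_at_def\<close>)
  then show ?thesis by simp
qed

lemma compact_K:
  fixes T :: "('n::finite) mi set"
  shows "compact {u :: 'n coefs. (\<forall>\<beta>. u \<beta> \<in> (if \<beta> \<in> mis k then {-1..1} else {0::real})) \<and>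
      (\<forall>t\<in>T. u t = 0) \<and> (\<exists>\<beta>\<in>mis k. \<bar>u \<beta>\<bar> = 1)}" (is "compact ?K")
proof -
  define I where "I \<beta> = (if \<beta> \<in> mis k then {-1..1} else {0::real})" for \<beta> :: "'n mi"
  have "?K = {u. (\<forall>\<beta>. u \<beta> \<in> I \<beta>) \<and> (\<forall>t\<in>T. u t = 0) \<and> (\<exists>\<beta>\<in>mis k. \<bar>u \<beta>\<bar> = 1)}"
    by (simp add: I_def)
  also have "\<dots> = Pi\<^sub>E UNIV I \<inter> (\<Inter>t\<in>T. {u. u t = 0}) \<inter> (\<Union>\<beta>\<in>mis k. {u. \<bar>u \<beta>\<bar> = 1})"
    by (auto simp: PiE_UNIV_domain Pi_iff)
  finally have Keq: "?K = Pi\<^sub>E UNIV I \<inter> (\<Inter>t\<in>T. {u. u t = 0}) \<inter> (\<Union>\<beta>\<in>mis k. {u. \<bar>u \<beta>\<bar> = 1})" .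
  moreover have "compact (Pi\<^sub>E UNIV I)"
  proof -
    have "compactin (product_topology (\<lambda>_. euclidean) UNIV) (Pi\<^sub>E UNIV I)"
      by (subst compactin_PiE) (auto simp: I_def)
    then show ?thesis by (simp add: euclidean_product_topology)
  qed
  moreover have "closed (\<Inter>t\<in>T. {u :: 'n coefs. u t = 0})"
    by (intro closed_INT ballI closed_Collect_eq continuous_on_product_coordinates continuous_on_const)
  moreover have "closed (\<Union>\<beta>\<in>mis k. {u :: 'n coefs. \<bar>u \<beta>\<bar> = 1})"
    by (intro closed_UN finite_mis ballI closed_Collect_eq continuous_intros continuous_on_product_coordinates)
  ultimately show ?thesis unfolding Keq
    by (intro compact_Int_closed) auto
qed

lemma L1:
  fixes E :: "((real^('n::finite)) \<times> 'n coefs) set"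
  assumes E: "bnd k X E" and aX: "a \<in> X"
  shows "\<exists>\<epsilon>>0. \<forall>c\<in>X. dist c a < \<epsilon> \<longrightarrow> fv.dim (fibre E c) \<le> fv.dim (fibre (rho k X E) a)"
proof (rule ccontr)
  define W where "W = fibre (rho k X E) a"
  have sW: "fv.subspace W" using bnd_rho[of k X E] aX by (simp add: bnd_def W_def)
  have Wd: "W \<subseteq> dualk k" unfolding W_def by (rule fibre_sub_dualk[OF bnd_rho])
  obtain T where T: "T \<subseteq> mis k" "\<forall>w\<in>W. (\<forall>t\<in>T. w t = 0) \<longrightarrow> w = 0" "card T \<le> fv.dim W"
    using exists_T[OF sW Wd] by blast
  have finT: "finite T" using T(1) finite_mis by (rule finite_subset)
  define K where "K = {u :: 'n coefs. (\<forall>\<beta>. u \<beta> \<in> (if \<beta> \<in> mis k then {-1..1} else {0::real})) \<and>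
      (\<forall>t\<in>T. u t = 0) \<and> (\<exists>\<beta>\<in>mis k. \<bar>u \<beta>\<bar> = 1)}"
  assume "\<not> ?thesis"
  then have bad: "\<And>\<epsilon>. \<epsilon> > 0 \<Longrightarrow> \<exists>c\<in>X. dist c a < \<epsilon> \<and> fv.dim W < fv.dim (fibre E c)"
    by (auto simp: W_def not_le)
  have getu: "\<exists>u. u \<in> fibre E c \<and> u \<in> K" if c: "c \<in> X" "fv.dim W < fv.dim (fibre E c)" for c
  proof -
    have sE: "fv.subspace (fibre E c)" using E c(1) by (simp add: bnd_def)
    have Ed: "fibre E c \<subseteq> dualk k" by (rule fibre_sub_dualk[OF E])
    have "\<not> (\<forall>v\<in>fibre E c. (\<forall>t\<in>T. v t = 0) \<longrightarrow> v = 0)"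
    proof
      assume "\<forall>v\<in>fibre E c. (\<forall>t\<in>T. v t = 0) \<longrightarrow> v = 0"
      then have "fv.dim (fibre E c) \<le> card T" by (rule dim_inj_le[OF sE Ed finT])
      with T(3) c(2) show False by linarith
    qed
    then obtain v where v: "v \<in> fibre E c" "\<forall>t\<in>T. v t = 0" "v \<noteq> 0" by blast
    have vd: "v \<in> dualk k" using v(1) Ed by blast
    obtain \<beta>0 where b0v: "v \<beta>0 \<noteq> 0" using v(3) by (auto simp: fun_eq_iff)
    have b0: "\<beta>0 \<in> mis k" using b0v vd by (force simp: dualk_def mis_def)
    define M where "M = Max ((\<lambda>\<beta>. \<bar>v \<beta>\<bar>) ` mis k)"
    have fin: "finite ((\<lambda>\<beta>. \<bar>v \<beta>\<bar>) ` mis k)" by (rule finite_imageI[OF finite_mis])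
    have Mge: "\<bar>v \<beta>\<bar> \<le> M" if "\<beta> \<in> mis k" for \<beta>
      unfolding M_def using fin that by (intro Max_ge) auto
    have "M \<in> (\<lambda>\<beta>. \<bar>v \<beta>\<bar>) ` mis k" unfolding M_def using fin b0 by (intro Max_in) auto
    then obtain \<beta>1 where b1: "\<beta>1 \<in> mis k" "\<bar>v \<beta>1\<bar> = M" by blast
    have Mpos: "M > 0" using Mge[OF b0] b0v by linarith
    define u where "u = sc (1/M) v"
    have "u \<in> fibre E c" unfolding u_def using sE v(1) by (rule fv.subspace_scale)
    moreover have "u \<in> K"
    proof -
      have "u \<beta> \<in> (if \<beta> \<in> mis k then {-1..1} else {0::real})" for \<beta>
      proof (cases "\<beta> \<in> mis k")
        case True
        have "\<bar>v \<beta>\<bar> / M \<le> 1" using Mge[OF True] Mpos by simp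
        moreover have "\<bar>u \<beta>\<bar> = \<bar>v \<beta>\<bar> / M" using Mpos by (simp add: sc_apply u_def abs_mult)
        ultimately have "\<bar>u \<beta>\<bar> \<le> 1" by simp
        then show ?thesis using True by (simp add: abs_le_iff)
      next
        case False
        then have "v \<beta> = 0" using vd by (auto simp: dualk_def mis_def)
        then show ?thesis using False by (simp add: sc_apply u_def)
      qed
      moreover have "\<forall>t\<in>T. u t = 0" using v(2) by (simp add: sc_apply u_def)
      moreover have "\<bar>u \<beta>1\<bar> = 1" using b1 Mpos by (simp add: sc_apply u_def abs_mult)
      ultimately show ?thesis unfolding K_def using b1(1) by blast
    qed
    ultimately show ?thesis by blast
  qed
  have "\<exists>c u. c \<in> X \<and> dist c a < 1 / Suc n \<and> u \<in> fibre E c \<and> u \<in> K" for n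
  proof -
    obtain c where c: "c \<in> X" "dist c a < 1 / Suc n" "fv.dim W < fv.dim (fibre E c)"
      using bad[of "1 / Suc n"] by auto
    then show ?thesis using getu[OF c(1) c(3)] by blast
  qed
  then obtain cs us where cu: "\<And>n. cs n \<in> X" "\<And>n. dist (cs n) a < 1 / Suc n"
      "\<And>n. us n \<in> fibre E (cs n)" "\<And>n. us n \<in> K"
    by metis
  have "compact K" unfolding K_def by (rule compact_K)
  then have "seq_compact K" by (rule compact_imp_seq_compact)
  then obtain l r where l: "l \<in> K" "strict_mono r" "(us \<circ> r) \<longlonglongrightarrow> l"
    using cu(4) unfolding seq_compact_def by metis
  have "(\<lambda>n. dist (cs n) a) \<longlonglongrightarrow> 0"
  proof (rule Lim_null_comparison)
    show "\<forall>\<^sub>F n in sequentially. norm (dist (cs n) a) \<le> 1 / real (Suc n)"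
    proof (rule always_eventually, rule allI)
      fix n show "norm (dist (cs n) a) \<le> 1 / real (Suc n)" using cu(2)[of n] by simp
    qed
    show "(\<lambda>n. 1 / real (Suc n)) \<longlonglongrightarrow> 0"
      using LIMSEQ_inverse_real_of_nat by (simp add: inverse_eq_divide)
  qed
  then have "cs \<longlonglongrightarrow> a" by (rule tendsto_dist_iff[THEN iffD2])
  then have cr: "(cs \<circ> r) \<longlonglongrightarrow> a" using l(2) by (rule LIMSEQ_subseq_LIMSEQ)
  have "(\<lambda>n. ((cs \<circ> r) n, (cs \<circ> r) n, (us \<circ> r) n)) \<longlonglongrightarrow> (a, a, l)"
    by (intro tendsto_Pair cr l(3))
  moreover have "\<forall>n. ((cs \<circ> r) n, (cs \<circ> r) n, (us \<circ> r) n) \<in> DeltaE k X E"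
    using DeltaE_diag[OF E cu(1) cu(3)] by simp
  ultimately have "(a, a, l) \<in> closure (DeltaE k X E)"
    unfolding closure_sequential
    by (intro exI[of _ "\<lambda>n. ((cs \<circ> r) n, (cs \<circ> r) n, (us \<circ> r) n)"] conjI) auto
  moreover have ld: "l \<in> dualk k"
  proof -
    have lb: "l \<beta> \<in> (if \<beta> \<in> mis k then {-1..1} else {0::real})" for \<beta> using l(1) unfolding K_def by blast
    have "l \<beta> = 0" if "k < mdeg \<beta>" for \<beta>
      using lb[of \<beta>] that by (simp add: mis_def)
    then show ?thesis by (simp add: dualk_def)
  qed
  ultimately have "l \<in> fibre (Eprime k X E) a" using aX by (simp add: fibre_def Eprime_def)
  then have "l \<in> W" unfolding W_def fibre_rho using aX fv.span_superset by auto
  moreover have "\<forall>t\<in>T. l t = 0" using l(1) unfolding K_def by blast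
  ultimately have "l = 0" using T(2) by blast
  moreover have "\<exists>\<beta>\<in>mis k. \<bar>l \<beta>\<bar> = 1" using l(1) unfolding K_def by blast
  ultimately show False by simp
qed


definition Eit :: "nat \<Rightarrow> (real^('n::finite)) set \<Rightarrow> nat \<Rightarrow> ((real^'n) \<times> 'n coefs) set" where
  "Eit k X i = (rho k X ^^ i) (E0 k X)"

lemma Eit_Suc: "Eit k X (Suc i) = rho k X (Eit k X i)"
  by (simp add: Eit_def)

lemma bnd_Eit: "bnd k X (Eit k X i)"
  by (cases i) (simp_all add: Eit_def bnd_E0 bnd_rho)

lemma fibre_Eit_mono: "fibre (Eit k X i) a \<subseteq> fibre (Eit k X (Suc i)) a"
  using sub_rho[OF bnd_Eit[of k X i]] by (auto simp: fibre_def Eit_Suc)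

definition Nn :: "nat \<Rightarrow> (real^('n::finite)) set \<Rightarrow> nat \<Rightarrow> real^'n \<Rightarrow> bool" where
  "Nn k X i a \<longleftrightarrow> a \<in> X \<and> fibre (Eit k X (Suc i)) a \<noteq> fibre (Eit k X i) a"

lemma claim2:
  fixes X :: "(real^('n::finite)) set"
  assumes N: "Nn k X (Suc (Suc i)) a"
  shows "\<exists>c. Nn k X i c \<and>
    fv.dim (fibre (Eit k X (Suc i)) c) < fv.dim (fibre (Eit k X (Suc (Suc (Suc i)))) a)"
proof -
  have aX: "a \<in> X" using N by (simp add: Nn_def)
  obtain e where e: "e > 0"
    and eb: "\<And>c. c \<in> X \<Longrightarrow> dist c a < e \<Longrightarrow>
      fv.dim (fibre (Eit k X (Suc i)) c) \<le> fv.dim (fibre (Eit k X (Suc (Suc i))) a)"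
    using L1[OF bnd_Eit[of k X "Suc i"] aX] unfolding Eit_Suc[symmetric] by blast
  have s2: "fv.subspace (fibre (Eit k X (Suc (Suc i))) a)"
    using bnd_Eit[of k X "Suc (Suc i)"] aX unfolding bnd_def by blast
  have s3: "fv.subspace (fibre (Eit k X (Suc (Suc (Suc i)))) a)"
    using bnd_Eit[of k X "Suc (Suc (Suc i))"] aX unfolding bnd_def by blast
  have lt: "fv.dim (fibre (Eit k X (Suc (Suc i))) a) < fv.dim (fibre (Eit k X (Suc (Suc (Suc i)))) a)"
    by (rule dim_psub[OF s2 s3 fibre_Eit_mono _ fibre_sub_dualk[OF bnd_Eit]]) (use N in \<open>auto simp: Nn_def\<close>)
  have e2: "e / 2 > 0" using e by simp
  have ne1: "fibre (rho k X (rho k X (Eit k X (Suc i)))) a \<noteq> fibre (rho k X (Eit k X (Suc i))) a"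
    using N by (simp add: Nn_def Eit_Suc)
  obtain c1 where c1: "c1 \<in> X" "dist c1 a < e / 2"
    "fibre (rho k X (Eit k X (Suc i))) c1 \<noteq> fibre (Eit k X (Suc i)) c1"
    using L3[OF bnd_Eit aX ne1 e2] by blast
  have ne2: "fibre (rho k X (rho k X (Eit k X i))) c1 \<noteq> fibre (rho k X (Eit k X i)) c1"
    using c1(3) by (simp add: Eit_Suc)
  obtain c2 where c2: "c2 \<in> X" "dist c2 c1 < e / 2"
    "fibre (rho k X (Eit k X i)) c2 \<noteq> fibre (Eit k X i) c2"
    using L3[OF bnd_Eit c1(1) ne2 e2] by blast
  have "dist c2 a \<le> dist c2 c1 + dist c1 a" by (rule dist_triangle)
  then have "dist c2 a < e" using c1(2) c2(2) by linarith
  then have "fv.dim (fibre (Eit k X (Suc i)) c2) \<le> fv.dim (fibre (Eit k X (Suc (Suc i))) a)"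
    using eb c2(1) by blast
  moreover have "Nn k X i c2" using c2 by (simp add: Nn_def Eit_Suc)
  ultimately show ?thesis using lt by (intro exI[of _ c2]) simp
qed

lemma claim3:
  fixes X :: "(real^('n::finite)) set"
  shows "Nn k X i a \<Longrightarrow> i div 2 + 1 \<le> fv.dim (fibre (Eit k X (Suc i)) a)"
proof (induction i arbitrary: a rule: less_induct)
  case (less i)
  show ?case
  proof (cases "i < 2")
    case True
    have aX: "a \<in> X" using less.prems by (simp add: Nn_def)
    obtain v where v: "v \<in> fibre (Eit k X (Suc i)) a" "v \<notin> fibre (Eit k X i) a"
      using less.prems fibre_Eit_mono[of k X i a] by (auto simp: Nn_def)
    have "0 \<in> fibre (Eit k X i) a"
      using bnd_Eit[of k X i] aX fv.subspace_0 by (auto simp: bnd_def)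
    then have "v \<noteq> 0" using v(2) by auto
    then have "1 \<le> fv.dim (fibre (Eit k X (Suc i)) a)"
      by (rule dim_pos[OF v(1) _ fibre_sub_dualk[OF bnd_Eit]])
    moreover have "i div 2 = 0" using True by simp
    ultimately show ?thesis by linarith
  next
    case False
    then obtain j where j: "i = Suc (Suc j)" by (metis less_2_cases_iff not_less_eq_eq not_less add_2_eq_Suc le_Suc_ex less_Suc_eq_le numeral_2_eq_2)
    obtain c where c: "Nn k X j c"
      "fv.dim (fibre (Eit k X (Suc j)) c) < fv.dim (fibre (Eit k X (Suc (Suc (Suc j)))) a)"
      using claim2[of k X j a] less.prems j by blast
    have "j div 2 + 1 \<le> fv.dim (fibre (Eit k X (Suc j)) c)"
    proof -
      have "j < i" using j by simp
      then show ?thesis using less.IH[of j c] c(1) by blast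
    qed
    moreover have "i div 2 + 1 = j div 2 + 2" using j by simp
    moreover have "fv.dim (fibre (Eit k X (Suc i)) a) = fv.dim (fibre (Eit k X (Suc (Suc (Suc j)))) a)"
      using j by simp
    ultimately show ?thesis using c(2) by linarith
  qed
qed

lemma stab:
  fixes X :: "(real^('n::finite)) set"
  shows "Eit k X (Suc (2 * card (mis k :: 'n mi set))) = Eit k X (2 * card (mis k :: 'n mi set))"
    (is "Eit k X (Suc ?m) = Eit k X ?m")
proof -
  have fe: "fibre (Eit k X (Suc ?m)) a = fibre (Eit k X ?m) a" if aX: "a \<in> X" for a
  proof (rule ccontr)
    assume "\<not> ?thesis"
    then have "Nn k X ?m a" using aX by (simp add: Nn_def)
    then have "?m div 2 + 1 \<le> fv.dim (fibre (Eit k X (Suc ?m)) a)" by (rule claim3)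
    moreover have "fv.dim (fibre (Eit k X (Suc ?m)) a) \<le> card (mis k :: 'n mi set)"
      by (rule dim_le_rdim[OF fibre_sub_dualk[OF bnd_Eit]])
    ultimately show False by simp
  qed
  have s1: "Eit k X (Suc ?m) \<subseteq> X \<times> dualk k" and s2: "Eit k X ?m \<subseteq> X \<times> dualk k"
    using bnd_Eit by (auto simp: bnd_def)
  show ?thesis
  proof (intro set_eqI iffI)
    fix p assume p: "p \<in> Eit k X (Suc ?m)"
    obtain a \<xi> where pa: "p = (a, \<xi>)" by (cases p)
    have "a \<in> X" using p pa s1 by auto
    then show "p \<in> Eit k X ?m" using fe[of a] p pa by (auto simp: fibre_def)
  next
    fix p assume p: "p \<in> Eit k X ?m"
    obtain a \<xi> where pa: "p = (a, \<xi>)" by (cases p)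
    have "a \<in> X" using p pa s2 by auto
    then show "p \<in> Eit k X (Suc ?m)" using fe[of a] p pa by (auto simp: fibre_def)
  qed
qed

lemma tau_Eit: "tau k (X :: (real^('n::finite)) set) = Eit k X (2 * card (mis k :: 'n mi set))"
  by (simp add: tau_def Eit_def rdim_def)

lemma closed_Eprime:
  assumes "closed X"
  shows "closed (Eprime k X E)"
proof -
  have "Eprime k X E = (\<lambda>p. (fst p, fst p, snd p)) -` (closure (DeltaE k X E) \<inter> (X \<times> X \<times> dualk k))"
    by (auto simp: Eprime_def)
  also have "closed \<dots>"
    by (intro closed_vimage closed_Int closed_closure closed_Times assms closed_dualk continuous_intros)
  finally show ?thesis .
qed

lemma tau_fix:
  fixes X :: "(real^('n::finite)) set"
  shows "tau k X = Eprime k X (tau k X)"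
proof -
  define T where "T = tau k X"
  have bT: "bnd k X T" unfolding T_def tau_Eit by (rule bnd_Eit)
  have rT: "rho k X T = T" unfolding T_def tau_Eit Eit_Suc[symmetric] by (rule stab)
  have "Eprime k X T \<subseteq> rho k X T"
  proof
    fix p assume p: "p \<in> Eprime k X T"
    obtain a \<xi> where pa: "p = (a, \<xi>)" by (cases p)
    have aX: "a \<in> X" using p pa Eprime_X by blast
    have "\<xi> \<in> fibre (Eprime k X T) a" using p pa by (simp add: fibre_def)
    then have "\<xi> \<in> fv.span (fibre (Eprime k X T) a)" using fv.span_superset by blast
    then show "p \<in> rho k X T" using pa aX by (simp add: rho_def fspan_eq)
  qed
  then have "Eprime k X T \<subseteq> T" using rT by simp
  moreover have "T \<subseteq> Eprime k X T" by (rule sub_Eprime[OF bT])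
  ultimately show ?thesis unfolding T_def by blast
qed

lemma closed_tau:
  fixes X :: "(real^('n::finite)) set"
  assumes "closed X"
  shows "closed (tau k X)"
  by (subst tau_fix) (rule closed_Eprime[OF assms])


lemma app_add: "app p (\<lambda>\<beta>. \<xi> \<beta> + \<eta> \<beta>) P = app p \<xi> P + app p \<eta> P"
  by (simp add: app_def sum.distrib distrib_right)

lemma app_scale: "app p (\<lambda>\<beta>. c * \<xi> \<beta>) P = c * app p \<xi> P"
  by (simp add: app_def sum_distrib_left mult.assoc)

lemma iota_add: "iota q p a (\<lambda>\<beta>. \<xi> \<beta> + \<eta> \<beta>) = iota q p a \<xi> + iota q p a \<eta>"
  by (auto simp: iota_def app_add fun_eq_iff)

lemma iota_scale: "iota q p a (\<lambda>\<beta>. c * \<xi> \<beta>) = sc c (iota q p a \<xi>)"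
  by (auto simp: iota_def app_scale fun_eq_iff sc_apply)

lemma iota_zero: "iota q p a (\<lambda>_. 0) = 0"
  by (auto simp: iota_def fun_eq_iff)

lemma cont_snd_coord [continuous_intros]:
  "continuous_on S (\<lambda>x::'a::topological_space \<times> ('b \<Rightarrow> 'c::topological_space). snd x \<gamma>)"
proof -
  have "continuous_on S (\<lambda>x::'a \<times> ('b \<Rightarrow> 'c). snd x)" by (rule continuous_on_snd[OF continuous_on_id])
  then show ?thesis by (rule continuous_on_product_then_coordinatewise)
qed

lemma cont_iota:
  "continuous_on UNIV (\<lambda>x::(real^('n::finite)) \<times> 'n coefs. iota q p (fst x) (snd x))"
proof (rule continuous_on_coordinatewise_then_product)
  fix \<beta> :: "'n mi"
  show "continuous_on UNIV (\<lambda>x::(real^('n::finite)) \<times> 'n coefs. iota q p (fst x) (snd x) \<beta>)"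
  proof (cases "mdeg \<beta> \<le> q")
    case True
    show ?thesis
      unfolding iota_def app_def proj_def taylor_coef_def shiftmono_def
  apply (simp only: True if_True) 
  apply (rule continuous_on_sum)
  apply (rule continuous_on_mult)
  apply (rule cont_snd_coord)
  apply (rule continuous_on_sum)
  apply (rule continuous_on_mult)
  apply (rule continuous_on_sum)
  apply (rule continuous_on_mult)
  apply (rule continuous_on_const)
  apply (rule continuous_on_prod)
  apply (rule continuous_on_mult)
  apply (rule continuous_on_const)
  apply (rule continuous_on_power)
  apply (intro continuous_intros)
  apply (rule continuous_on_prod)
  apply (rule continuous_on_mult)
  apply (rule continuous_on_const)
  apply (rule continuous_on_power)
  apply (intro continuous_intros)
  done
  next
    case False
    then show ?thesis unfolding iota_def by simp
  qed
qed

theorem lemma2p2: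
  fixes X :: "(real^'n::finite) set" and p q :: nat
  assumes "closed X" and "p \<le> q"
  shows "is_bundle X (dualk p) (tau_p q p X) \<and>
         closedin (top_of_set (X \<times> dualk p)) (tau_p q p X)"
proof
  define T where "T = tau q X"
  have bT: "bnd q X T" unfolding T_def tau_Eit by (rule bnd_Eit)
  have cT: "closed T" unfolding T_def by (rule closed_tau[OF assms(1)])
  have fib: "fibre (tau_p q p X) a = {\<xi>. \<xi> \<in> dualk p \<and> iota q p a \<xi> \<in> fibre T a}" if "a \<in> X" for a
    using that by (auto simp: fibre_def tau_p_def T_def)
  show "is_bundle X (dualk p) (tau_p q p X)"
    unfolding is_bundle_def
  proof (intro conjI ballI allI)
    show "tau_p q p X \<subseteq> X \<times> dualk p" by (auto simp: tau_p_def)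
  next
    fix a assume aX: "a \<in> X"
    have sT: "fv.subspace (fibre T a)" using bT aX unfolding bnd_def by blast
    have z: "(\<lambda>_. 0::real) \<in> dualk p" by (simp add: dualk_def)
    have "iota q p a (\<lambda>_. 0) \<in> fibre T a" unfolding iota_zero by (rule fv.subspace_0[OF sT])
    then show "(\<lambda>_. 0) \<in> fibre (tau_p q p X) a" using z fib[OF aX] by blast
  next
    fix a \<xi> \<eta> assume aX: "a \<in> X" and x: "\<xi> \<in> fibre (tau_p q p X) a" and y: "\<eta> \<in> fibre (tau_p q p X) a"
    have sT: "fv.subspace (fibre T a)" using bT aX unfolding bnd_def by blast
    have xx: "\<xi> \<in> dualk p" "iota q p a \<xi> \<in> fibre T a" using x fib[OF aX] by auto
    have yy: "\<eta> \<in> dualk p" "iota q p a \<eta> \<in> fibre T a" using y fib[OF aX] by auto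
    have "(\<lambda>\<beta>. \<xi> \<beta> + \<eta> \<beta>) \<in> dualk p" using xx(1) yy(1) by (simp add: dualk_def)
    moreover have "iota q p a (\<lambda>\<beta>. \<xi> \<beta> + \<eta> \<beta>) \<in> fibre T a"
      unfolding iota_add by (rule fv.subspace_add[OF sT xx(2) yy(2)])
    ultimately show "(\<lambda>\<beta>. \<xi> \<beta> + \<eta> \<beta>) \<in> fibre (tau_p q p X) a" using fib[OF aX] by blast
  next
    fix a \<xi> c assume aX: "a \<in> X" and x: "\<xi> \<in> fibre (tau_p q p X) a"
    have sT: "fv.subspace (fibre T a)" using bT aX unfolding bnd_def by blast
    have xx: "\<xi> \<in> dualk p" "iota q p a \<xi> \<in> fibre T a" using x fib[OF aX] by auto
    have "(\<lambda>\<beta>. c * \<xi> \<beta>) \<in> dualk p" using xx(1) by (simp add: dualk_def)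
    moreover have "iota q p a (\<lambda>\<beta>. c * \<xi> \<beta>) \<in> fibre T a"
      unfolding iota_scale by (rule fv.subspace_scale[OF sT xx(2)])
    ultimately show "(\<lambda>\<beta>. c * \<xi> \<beta>) \<in> fibre (tau_p q p X) a" using fib[OF aX] by blast
  qed
next
  define T where "T = tau q X"
  have cT: "closed T" unfolding T_def by (rule closed_tau[OF assms(1)])
  have eq: "tau_p q p X = (X \<times> dualk p) \<inter> ((\<lambda>x. (fst x, iota q p (fst x) (snd x))) -` T)"
    by (auto simp: tau_p_def T_def)
  have "closed ((\<lambda>x::(real^'n) \<times> 'n coefs. (fst x, iota q p (fst x) (snd x))) -` T)"
    by (intro closed_vimage cT continuous_on_Pair continuous_on_fst continuous_on_id cont_iota)
  then show "closedin (top_of_set (X \<times> dualk p)) (tau_p q p X)"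
    unfolding eq by (rule closedin_closed_Int)
qed

end
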